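(* Let $N\ge1$ and $K\ge4$ be integers and let $\gamma\in(0,1)$ satisfy $$\gamma\le\frac{1}{(F_{K+2}-3)(1+N/2)}.$$ Let $\mu_0,\sigma_0,\sigma\ge1$ satisfy $\frac{\sigma}{(\mu_0\sigma)^\gamma}\ge\sigma_0$, and define $$\lambda_k=\mu_0\sigma^{(F_{k+2}-2)+(F_{k+2}-3)N/2},\qquad \mu_k=\mu_0\sigma^{(F_{k+2}-2)+(F_{k+3}-3)N/2}\qquad(k=1,\dots,K-1),$$ $$\lambda_K=\mu_0\sigma^{(2F_K-2)+(F_{K+2}-3)N/2},\qquad \mu_K=\mu_0\sigma^{(2F_K-2)+(3F_K-3)N/2}.$$ Then the following conditions hold: $$\lambda_{k+1}^{1-\gamma}\ge\mu_k\sigma_0\ (k=0,\dots,K-1),\qquad \frac{\mu_1}{\lambda_1}\ge\Big(\frac{\lambda_1}{\mu_0}\Big)^N,$$ $$\frac{\mu_k}{\lambda_k}\ge\max\Big\{\Big(\frac{\lambda_k}{\mu_{k-1}}\frac{\lambda_{k-1}}{\mu_{k-2}}\Big)^{N/2},\ \frac{(\lambda_k/\mu_{k-1})^N(\lambda_{k-1}/\mu_{k-2})^{N/2}}{\mu_{k-1}/\lambda_{k-1}}\Big\}\quad(k=2,\dots,K-1),$$ $$\frac{\mu_K}{\lambda_K}\ge\max\Big\{\Big(\frac{\lambda_K}{\mu_{K-1}}\Big)^{N/2},\ \frac{(\lambda_K/\mu_{K-1})^N(\lambda_{K-1}/\mu_{K-2})^{N/2}}{\mu_{K-1}/\lamb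da_{K-1}}\Big\}.$$
   Context: $\{F_k\}_{k\ge0}$ is the Fibonacci sequence: $F_0=F_1=1$, $F_{k+2}=F_k+F_{k+1}$ for $k\ge0$. *)

theory Defs
  imports Complex_Main
begin

text \<open>Fibonacci sequence with the paper's convention F_0 = F_1 = 1.\<close>
fun F :: "nat \<Rightarrow> nat" where
  "F 0 = 1"
| "F (Suc 0) = 1"
| "F (Suc (Suc k)) = F k + F (Suc k)"

end

theory Submission
  imports Defs
begin


lemma F_pos: "F n \<ge> 1"
  by (induction n rule: F.induct) auto

lemma F_Suc_mono: "F n \<le> F (Suc n)"
  by (induction n rule: F.induct) auto

lemma F_mono: "m \<le> n \<Longrightarrow> F m \<le> F n"
  by (rule lift_Suc_mono_le[of F]) (auto simp: F_Suc_mono)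

lemma F_rec: "real (F (n+2)) = real (F n) + real (F (n+1))"
  by (simp add: eval_nat_numeral)

lemma ratio_pow:
  fixes m s x y :: real
  assumes "m > 0" "s > 0"
  shows "(m * s powr x) / (m * s powr y) = s powr (x - y)"
  using assms by (simp add: powr_diff)

lemma key:
  fixes m s s0 g a b :: real
  assumes m: "m \<ge> 1" and s: "s \<ge> 1" and g1: "g < 1"
    and r: "s / (m * s) powr g \<ge> s0"
    and e: "b + 1 - g \<le> a * (1 - g)"
  shows "m * s powr b * s0 \<le> (m * s powr a) powr (1 - g)"
proof -
  have mp: "m > 0" and sp: "s > 0" using m s by auto
  have "m * s powr b * s0 \<le> m * s powr b * (s / (m * s) powr g)"
    using r mp sp by (intro mult_left_mono) auto
  also have "\<dots> = m powr (1 - g) * s powr (b + 1 - g)"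
    using mp sp by (simp add: powr_diff powr_add powr_mult field_simps)
  also have "\<dots> \<le> m powr (1 - g) * s powr (a * (1 - g))"
    using s e mp by (intro mult_left_mono powr_mono) auto
  also have "\<dots> = (m * s powr a) powr (1 - g)"
    using mp sp by (simp add: powr_mult powr_powr)
  finally show ?thesis .
qed

theorem proposition5p1:
  fixes N K :: nat and \<gamma> \<sigma>0 \<sigma> :: real and lam mu :: "nat \<Rightarrow> real"
  assumes N: "N \<ge> 1" and K: "K \<ge> 4"
    and g0: "0 < \<gamma>" and g1: "\<gamma> < 1"
    and gbound: "\<gamma> \<le> 1 / ((real (F (K+2)) - 3) * (1 + real N / 2))"
    and mu0: "mu 0 \<ge> 1" and s0: "\<sigma>0 \<ge> 1" and s: "\<sigma> \<ge> 1"
    and ratio: "\<sigma> / (mu 0 * \<sigma>) powr \<gamma> \<ge> \<sigma>0"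
    and lam_def: "\<And>k. 1 \<le> k \<Longrightarrow> k \<le> K - 1 \<Longrightarrow>
       lam k = mu 0 * \<sigma> powr ((real (F (k+2)) - 2) + (real (F (k+2)) - 3) * real N / 2)"
    and mu_def: "\<And>k. 1 \<le> k \<Longrightarrow> k \<le> K - 1 \<Longrightarrow>
       mu k = mu 0 * \<sigma> powr ((real (F (k+2)) - 2) + (real (F (k+3)) - 3) * real N / 2)"
    and lamK: "lam K = mu 0 * \<sigma> powr ((2 * real (F K) - 2) + (real (F (K+2)) - 3) * real N / 2)"
    and muK: "mu K = mu 0 * \<sigma> powr ((2 * real (F K) - 2) + (3 * real (F K) - 3) * real N / 2)"
  shows "(\<forall>k \<le> K - 1. lam (k+1) powr (1 - \<gamma>) \<ge> mu k * \<sigma>0)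
    \<and> mu 1 / lam 1 \<ge> (lam 1 / mu 0) powr real N
    \<and> (\<forall>k. 2 \<le> k \<and> k \<le> K - 1 \<longrightarrow>
          mu k / lam k \<ge> max ((lam k / mu (k-1) * (lam (k-1) / mu (k-2))) powr (real N / 2))
                              ((lam k / mu (k-1)) powr real N * (lam (k-1) / mu (k-2)) powr (real N / 2)
                                 / (mu (k-1) / lam (k-1))))
    \<and> mu K / lam K \<ge> max ((lam K / mu (K-1)) powr (real N / 2))
                          ((lam K / mu (K-1)) powr real N * (lam (K-1) / mu (K-2)) powr (real N / 2)
                             / (mu (K-1) / lam (K-1)))"
  
proof -
  define m where "m = mu 0"
  define f where "f = (\<lambda>n. real (F n))"
  have mp: "m > 0" and sp: "\<sigma> > 0" using mu0 s m_def by auto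
  define A where "A = (\<lambda>k. (f (k+2) - 2) + (f (k+2) - 3) * real N / 2)"
  define B where "B = (\<lambda>k. (f (k+2) - 2) + (f (k+3) - 3) * real N / 2)"
  define AK where "AK = (2 * f K - 2) + (f (K+2) - 3) * real N / 2"
  define BK where "BK = (2 * f K - 2) + (3 * f K - 3) * real N / 2"
  have lamA: "lam k = m * \<sigma> powr A k" if "1 \<le> k" "k \<le> K - 1" for k
    using lam_def[OF that] by (simp add: A_def f_def m_def)
  have B0: "B 0 = 0" by (simp add: B_def f_def eval_nat_numeral)
  have muB: "mu k = m * \<sigma> powr B k" if "k \<le> K - 1" for k
  proof (cases "k = 0")
    case True thus ?thesis using B0 sp by (simp add: m_def)
  next
    case False thus ?thesis using mu_def[of k] that by (simp add: B_def f_def m_def)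
  qed
  have lamK': "lam K = m * \<sigma> powr AK" using lamK by (simp add: AK_def f_def m_def)
  have muK': "mu K = m * \<sigma> powr BK" using muK by (simp add: BK_def f_def m_def)
  obtain K' where K': "K = K' + 4" using K by (metis add.commute le_Suc_ex)
  define C where "C = (f (K+2) - 3) * (1 + real N / 2)"
  have fK2: "f (K+2) \<ge> 13"
  proof -
    have "F 6 \<le> F (K+2)" using K by (intro F_mono) auto
    thus ?thesis by (simp add: f_def eval_nat_numeral)
  qed
  have Cpos: "C > 0" using fK2 by (simp add: C_def)
  have gC: "\<gamma> * C \<le> 1"
  proof -
    have "\<gamma> \<le> 1 / C" using gbound by (simp add: C_def f_def)
    hence "\<gamma> * C \<le> (1 / C) * C" using Cpos by (intro mult_right_mono) auto
    thus ?thesis using Cpos by simp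
  qed
  have fmono: "f i \<le> f j" if "i \<le> j" for i j using F_mono[OF that] by (simp add: f_def)
  have frec: "f (n+2) = f n + f (n+1)" for n by (simp add: f_def F_rec)
  have fpos: "f n \<ge> 1" for n using F_pos[of n] by (simp add: f_def)
  have gmul: "\<gamma> * x \<le> 1" if "x \<le> C" for x
  proof -
    have "\<gamma> * x \<le> \<gamma> * C" using that g0 by (intro mult_left_mono) auto
    thus ?thesis using gC by linarith
  qed
  have c1: "lam (k+1) powr (1 - \<gamma>) \<ge> mu k * \<sigma>0" if k: "k \<le> K - 1" for k
  proof (cases "k = K - 1")
    case True
    have kk: "k + 1 = K" using True K by simp
    have e1: "AK - 1 \<le> C"
    proof -
      have "2 * f K \<le> f (K+2)" using frec[of K] fmono[of K "K+1"] by simp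
      moreover have "AK - 1 - C = 2 * f K - f (K+2)" unfolding AK_def C_def by (simp add: field_simps)
      ultimately show ?thesis by linarith
    qed
    have e2: "AK - B k - 1 \<ge> 1"
    proof -
      have "f (K'+2) \<ge> f 2" by (rule fmono) simp
      hence "f (K'+2) \<ge> 2" by (simp add: f_def eval_nat_numeral)
      moreover have "AK - B k - 1 = f (K'+2) - 1"
        unfolding AK_def B_def True K' by (simp add: f_def eval_nat_numeral field_simps)
      ultimately show ?thesis by simp
    qed
    have "B k + 1 - \<gamma> \<le> AK * (1 - \<gamma>)" using gmul[OF e1] e2 by (simp add: algebra_simps)
    thus ?thesis unfolding kk lamK' muB[OF k] using key[OF mu0[folded m_def] s g1 ratio[folded m_def]] by blast
  next
    case False
    hence k1: "1 \<le> k + 1" "k + 1 \<le> K - 1" using k by auto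
    have e1: "A (k+1) - 1 \<le> C"
    proof -
      have "f (k+3) \<le> f (K+2)" using k1 by (intro fmono) simp
      hence "f (k+1+2) - 3 \<le> f (K+2) - 3" by (simp add: eval_nat_numeral)
      hence "(f (k+1+2) - 3) * (1 + real N / 2) \<le> (f (K+2) - 3) * (1 + real N / 2)"
        by (intro mult_right_mono) auto
      thus ?thesis unfolding A_def C_def by (simp add: field_simps)
    qed
    have e2: "A (k+1) - B k - 1 = f (k+1) - 1"
      unfolding A_def B_def by (simp add: f_def eval_nat_numeral field_simps)
    have "B k + 1 - \<gamma> \<le> A (k+1) * (1 - \<gamma>)"
    proof (cases "k = 0")
      case True
      have "A 1 = 1" by (simp add: A_def f_def eval_nat_numeral)
      thus ?thesis using True B0 by simp
    next
      case False
      have "f (k+1) \<ge> f 2" using False by (intro fmono) simp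
      hence "f (k+1) \<ge> 2" by (simp add: f_def eval_nat_numeral)
      thus ?thesis using gmul[OF e1] e2 by (simp add: algebra_simps)
    qed
    thus ?thesis unfolding lamA[OF k1] muB[OF k] using key[OF mu0[folded m_def] s g1 ratio[folded m_def]] by blast
  qed
  have c2: "mu 1 / lam 1 \<ge> (lam 1 / mu 0) powr real N"
  proof -
    have h: "1 \<le> K - 1" using K by simp
    have "mu 1 / lam 1 = \<sigma> powr (B 1 - A 1)" using muB[of 1] lamA[OF order_refl h] h ratio_pow[OF mp sp] by simp
    moreover have "lam 1 / mu 0 = \<sigma> powr (A 1 - B 0)" using muB[of 0] lamA[OF order_refl h] ratio_pow[OF mp sp] by simp
    moreover have "B 1 - A 1 = (A 1 - B 0) * real N"
      by (simp add: A_def B_def f_def eval_nat_numeral algebra_simps)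
    ultimately show ?thesis by (simp add: powr_powr)
  qed
  have c3: "mu k / lam k \<ge> max ((lam k / mu (k-1) * (lam (k-1) / mu (k-2))) powr (real N / 2))
                              ((lam k / mu (k-1)) powr real N * (lam (k-1) / mu (k-2)) powr (real N / 2)
                                 / (mu (k-1) / lam (k-1)))" if k: "2 \<le> k" "k \<le> K - 1" for k
  proof -
    obtain j where j: "k = j + 2" using k by (metis add.commute le_Suc_ex)
    have r1: "mu k / lam k = \<sigma> powr (B k - A k)" using muB[of k] lamA[of k] k ratio_pow[OF mp sp] by simp
    have r2: "lam k / mu (k-1) = \<sigma> powr (A k - B (k-1))" using muB[of "k-1"] lamA[of k] k ratio_pow[OF mp sp] by simp
    have r3: "lam (k-1) / mu (k-2) = \<sigma> powr (A (k-1) - B (k-2))" using muB[of "k-2"] lamA[of "k-1"] k ratio_pow[OF mp sp] by simp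
    have r4: "mu (k-1) / lam (k-1) = \<sigma> powr (B (k-1) - A (k-1))" using muB[of "k-1"] lamA[of "k-1"] k ratio_pow[OF mp sp] by simp
    have x1: "(A k - B (k-1) + (A (k-1) - B (k-2))) * (real N / 2) = B k - A k"
      unfolding j A_def B_def by (simp add: f_def eval_nat_numeral field_simps)
    have x2: "(A k - B (k-1)) * real N + (A (k-1) - B (k-2)) * (real N / 2) - (B (k-1) - A (k-1)) = B k - A k"
      unfolding j A_def B_def by (simp add: f_def eval_nat_numeral field_simps)
    have t1: "(\<sigma> powr (A k - B (k-1)) * \<sigma> powr (A (k-1) - B (k-2))) powr (real N / 2) = \<sigma> powr (B k - A k)"
      by (simp only: powr_add[symmetric] powr_powr x1)
    have t2: "(\<sigma> powr (A k - B (k-1))) powr real N * (\<sigma> powr (A (k-1) - B (k-2))) powr (real N / 2)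
       / \<sigma> powr (B (k-1) - A (k-1)) = \<sigma> powr (B k - A k)"
      by (simp only: powr_add[symmetric] powr_powr powr_diff[symmetric] x2)
    show ?thesis unfolding r1 r2 r3 r4 t1 t2 by simp
  qed
  have c4: "mu K / lam K \<ge> max ((lam K / mu (K-1)) powr (real N / 2))
                          ((lam K / mu (K-1)) powr real N * (lam (K-1) / mu (K-2)) powr (real N / 2)
                             / (mu (K-1) / lam (K-1)))"
  proof -
    have r1: "mu K / lam K = \<sigma> powr (BK - AK)" using muK' lamK' ratio_pow[OF mp sp] by simp
    have r2: "lam K / mu (K-1) = \<sigma> powr (AK - B (K-1))" using muB[of "K-1"] lamK' ratio_pow[OF mp sp] by simp
    have r3: "lam (K-1) / mu (K-2) = \<sigma> powr (A (K-1) - B (K-2))" using muB[of "K-2"] lamA[of "K-1"] K ratio_pow[OF mp sp] by simp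
    have r4: "mu (K-1) / lam (K-1) = \<sigma> powr (B (K-1) - A (K-1))" using muB[of "K-1"] lamA[of "K-1"] K ratio_pow[OF mp sp] by simp
    have x1: "(AK - B (K-1)) * (real N / 2) = BK - AK"
      unfolding K' AK_def BK_def B_def by (simp add: f_def eval_nat_numeral field_simps)
    have x2: "(AK - B (K-1)) * real N + (A (K-1) - B (K-2)) * (real N / 2) - (B (K-1) - A (K-1)) = BK - AK"
      unfolding K' AK_def BK_def A_def B_def by (simp add: f_def eval_nat_numeral field_simps)
    have t1: "(\<sigma> powr (AK - B (K-1))) powr (real N / 2) = \<sigma> powr (BK - AK)"
      by (simp only: powr_powr x1)
    moreover have t2: "(\<sigma> powr (AK - B (K-1))) powr real N * (\<sigma> powr (A (K-1) - B (K-2))) powr (real N / 2)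
       / \<sigma> powr (B (K-1) - A (K-1)) = \<sigma> powr (BK - AK)"
      by (simp only: powr_add[symmetric] powr_powr powr_diff[symmetric] x2)
    ultimately show ?thesis unfolding r1 r2 r3 r4 by simp
  qed
  show ?thesis using c1 c2 c3 c4 by blast
qed

end
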